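(* Let $\Sigma\in\mathbb{R}^{N\times N}$ be symmetric positive definite, $\mu\in\mathbb{R}^N$, $\gamma\in[0,1]$, and $\mathcal T$ a balanced binary tree whose leaves are the assets $1,\dots,N$. Then the HRP-$\Sigma\mu$ algorithm runs in $O(N^2)$ time and $O(N^2)$ space, the space being dominated by storing $\Sigma$.
   Context: HRP-$\Sigma\mu$ algorithm (inputs $\Sigma,\mu,\mathcal T,\gamma$), defined recursively. At a leaf (asset $i$) return $\hat w=(1)$, $v=\Sigma_{ii}$, $s=\mu_i$. At an internal node $n$ with left and right subtrees having leaf index sets $L,R$: recursively obtain $(\hat w_L,v_L,s_L)$ and $(\hat w_R,v_R,s_R)$; compute $c=\hat w_L^\top\Sigma_{LR}\hat w_R$, $\Delta=v_Lv_R-\gamma^2c^2$, $\alpha_L^{\mathrm{raw}}=(v_Rs_L-\gamma cs_R)/\Delta$, $\alpha_R^{\mathrm{raw}}=(v_Ls_R-\gamma cs_L)/\Delta$, $Z=|\alpha_L^{\mathrm{raw}}|+|\alpha_R^{\mathrm{raw}}|$, $\alpha_k=\alpha_k^{\mathrm{raw}}/Z$; the node representative is the stacked vector $\hat w_n=(\alpha_L\hat w_L,\alpha_R\hat w_R)\in\mathbb{R}^{L\cup R}$, with $v_n=\hat w_n^\top\Sigma_{nn}\hat w_n$ and $s_n=\hat w_n^\top\mu_n$. The output is the representative at the root. Time is counted in arithmetic operations on real numbers; a balanced binary tree has depth $O(\log N)$ with the leaves split as evenly as possible at every node. *)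

theory Defs
  imports Main "HOL.Real"
begin

text \<open>Cost model: the algorithm is written out with explicit counts of the
arithmetic operations on reals it performs (time) and of the number of reals
it keeps in working memory besides the input (auxiliary space).\<close>

datatype htree = Leaf nat | Node htree htree

fun leaves :: "htree \<Rightarrow> nat list" where
  "leaves (Leaf i) = [i]"
| "leaves (Node l r) = leaves l @ leaves r"

fun balanced :: "htree \<Rightarrow> bool" where
  "balanced (Leaf i) = True"
| "balanced (Node l r) =
     (balanced l \<and> balanced r \<and>
      length (leaves l) \<le> length (leaves r) + 1 \<and>
      length (leaves r) \<le> length (leaves l) + 1)"

definition spd :: "nat \<Rightarrow> (nat \<Rightarrow> nat \<Rightarrow> real) \<Rightarrow> bool" where
  "spd N S \<longleftrightarrow> (\<forall>i<N. \<forall>j<N. S i j = S j i) \<and>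
     (\<forall>x::nat \<Rightarrow> real. (\<exists>i<N. x i \<noteq> 0) \<longrightarrow>
        (\<Sum>i<N. \<Sum>j<N. x i * S i j * x j) > 0)"

text \<open>Dot product of two vectors of length n: n multiplications, n-1 additions.\<close>
definition dotv :: "real list \<Rightarrow> real list \<Rightarrow> real" where
  "dotv x y = sum_list (map2 (*) x y)"
definition dot_ops :: "nat \<Rightarrow> nat" where
  "dot_ops n = 2 * n - 1"

text \<open>x^T S_{IJ} y computed as x^T (S_{IJ} y).\<close>
definition matvec :: "(nat \<Rightarrow> nat \<Rightarrow> real) \<Rightarrow> nat list \<Rightarrow> nat list \<Rightarrow> real list \<Rightarrow> real list" where
  "matvec S I J y = map (\<lambda>i. sum_list (map2 (\<lambda>j yj. S i j * yj) J y)) I"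
definition bilin :: "(nat \<Rightarrow> nat \<Rightarrow> real) \<Rightarrow> nat list \<Rightarrow> nat list \<Rightarrow> real list \<Rightarrow> real list \<Rightarrow> real" where
  "bilin S I J x y = dotv x (matvec S I J y)"
definition bilin_ops :: "nat \<Rightarrow> nat \<Rightarrow> nat" where
  "bilin_ops m k = m * dot_ops k + dot_ops m"

text \<open>HRP-Sigma-mu. Returns (representative w (indexed along leaves t), v, s,
  number of arithmetic operations, peak auxiliary space in reals).\<close>
fun hrp :: "(nat \<Rightarrow> nat \<Rightarrow> real) \<Rightarrow> (nat \<Rightarrow> real) \<Rightarrow> real \<Rightarrow> htree
             \<Rightarrow> real list \<times> real \<times> real \<times> nat \<times> nat" where
  "hrp S m g (Leaf i) = ([1], S i i, m i, 0, 3)"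
| "hrp S m g (Node l r) =
    (let (wL, vL, sL, oL, pL) = hrp S m g l;
         (wR, vR, sR, oR, pR) = hrp S m g r;
         L = leaves l; R = leaves r; n = length L + length R;
         c = bilin S L R wL wR;
         gc = g * c;
         D = vL * vR - gc * gc;
         aLr = (vR * sL - gc * sR) / D;
         aRr = (vL * sR - gc * sL) / D;
         Z = \<bar>aLr\<bar> + \<bar>aRr\<bar>;
         aL = aLr / Z; aR = aRr / Z;
         w = map ((*) aL) wL @ map ((*) aR) wR;
         v = bilin S (L @ R) (L @ R) w w;
         s = dotv w (map m (L @ R));
         ops = oL + oR + bilin_ops (length L) (length R)
               + 4 + 4 + 4 + 3 + 2 + n + bilin_ops n n + dot_ops n;
         sp = max pL (max (length wL + 3 + pR) (3 * n + 12))
     in (w, v, s, ops, sp))"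

definition hrp_output :: "(nat \<Rightarrow> nat \<Rightarrow> real) \<Rightarrow> (nat \<Rightarrow> real) \<Rightarrow> real \<Rightarrow> htree \<Rightarrow> real list" where
  "hrp_output S m g t = fst (hrp S m g t)"

definition hrp_time :: "(nat \<Rightarrow> nat \<Rightarrow> real) \<Rightarrow> (nat \<Rightarrow> real) \<Rightarrow> real \<Rightarrow> htree \<Rightarrow> nat" where
  "hrp_time S m g t = fst (snd (snd (snd (hrp S m g t))))"

definition hrp_aux_space :: "(nat \<Rightarrow> nat \<Rightarrow> real) \<Rightarrow> (nat \<Rightarrow> real) \<Rightarrow> real \<Rightarrow> htree \<Rightarrow> nat" where
  "hrp_aux_space S m g t = snd (snd (snd (snd (hrp S m g t))))"

text \<open>Total space: the stored input Sigma (N*N reals), mu (N reals), plus auxiliary space.\<close>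
definition hrp_space :: "nat \<Rightarrow> (nat \<Rightarrow> nat \<Rightarrow> real) \<Rightarrow> (nat \<Rightarrow> real) \<Rightarrow> real \<Rightarrow> htree \<Rightarrow> nat" where
  "hrp_space N S m g t = N * N + N + hrp_aux_space S m g t"

end

theory Submission
  imports Defs
begin

lemma leaves_ne: "length (leaves t) \<ge> 1"
  by (induction t) auto

lemma hrp_len: "length (fst (hrp S m g t)) = length (leaves t)"
  by (induction t) (auto simp: Let_def split: prod.splits)

lemma ab_bound:
  fixes a b :: nat
  assumes "a \<ge> 1" "b \<ge> 1" "a \<le> b + 1" "b \<le> a + 1"
  shows "5 * (a * b) \<ge> (a + b)^2"
proof -
  have "b = a \<or> b = a + 1 \<or> a = b + 1" using assms by linarith
  then show ?thesis
  proof (elim disjE)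
    assume "b = a" then show ?thesis by (simp add: power2_eq_square algebra_simps)
  next
    assume h: "b = a + 1"
    have "a * a \<ge> 1" using assms(1) by simp
    then show ?thesis using h by (simp add: power2_eq_square algebra_simps)
  next
    assume h: "a = b + 1"
    have "b * b \<ge> 1" using assms(2) by simp
    then show ?thesis using h by (simp add: power2_eq_square algebra_simps)
  qed
qed

lemma arith_aux:
  fixes oL oR x y z P Q A2 B2 a n :: nat
  assumes "oL \<le> 30 * A2" "oR \<le> 30 * B2" "x + 1 = 2 * Q + a" "y + 1 = 2 * P + n"
    "z + 1 = 2 * n" "P = A2 + B2 + 2 * Q" "P \<le> 5 * Q" "n \<le> P" "4 \<le> P" "a \<le> n"
  shows "oL + oR + x + 4 + 4 + 4 + 3 + 2 + n + y + z \<le> 30 * P"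
  using assms by linarith

lemma hrp_bounds:
  "balanced t \<Longrightarrow>
   fst (snd (snd (snd (hrp S m g t)))) \<le> 30 * (length (leaves t))^2 \<and>
   snd (snd (snd (snd (hrp S m g t)))) \<le> 15 * length (leaves t)"
proof (induction t)
  case (Leaf i)
  then show ?case by simp
next
  case (Node l r)
  obtain wL vL sL oL pL where hl: "hrp S m g l = (wL,vL,sL,oL,pL)" by (cases "hrp S m g l") auto
  obtain wR vR sR oR pR where hr: "hrp S m g r = (wR,vR,sR,oR,pR)" by (cases "hrp S m g r") auto
  define a where "a = length (leaves l)"
  define b where "b = length (leaves r)"
  have a1: "a \<ge> 1" "b \<ge> 1" using leaves_ne a_def b_def by auto
  have bal: "a \<le> b + 1" "b \<le> a + 1" using Node.prems a_def b_def by auto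
  have IHl: "oL \<le> 30 * a^2" "pL \<le> 15 * a" using Node.IH(1) Node.prems hl a_def by auto
  have IHr: "oR \<le> 30 * b^2" "pR \<le> 15 * b" using Node.IH(2) Node.prems hr b_def by auto
  have lw: "length wL = a" using hrp_len[of S m g l] hl a_def by simp
  have ops: "fst (snd (snd (snd (hrp S m g (Node l r))))) =
      oL + oR + bilin_ops a b + 4 + 4 + 4 + 3 + 2 + (a + b) + bilin_ops (a+b) (a+b) + dot_ops (a+b)"
    by (simp add: hl hr Let_def a_def b_def)
  have sp: "snd (snd (snd (snd (hrp S m g (Node l r))))) =
      max pL (max (length wL + 3 + pR) (3 * (a+b) + 12))"
    by (simp add: hl hr Let_def a_def b_def)
  have ln: "length (leaves (Node l r)) = a + b" by (simp add: a_def b_def)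
  have c1: "bilin_ops a b + 1 = 2 * (a * b) + a"
    using a1 by (simp add: bilin_ops_def dot_ops_def algebra_simps)
  have c2: "bilin_ops (a+b) (a+b) + 1 = 2 * (a+b)^2 + (a+b)"
  proof -
    obtain k where k: "a + b = Suc k" using a1 by (metis add_is_0 not0_implies_Suc not_one_le_zero)
    show ?thesis unfolding k by (simp add: bilin_ops_def dot_ops_def power2_eq_square algebra_simps)
  qed
  have c3: "dot_ops (a+b) + 1 = 2 * (a+b)"
    using a1 by (simp add: dot_ops_def)
  have sq: "(a+b)^2 = a^2 + b^2 + 2 * (a*b)" by (simp add: power2_eq_square algebra_simps)
  have ab: "5 * (a * b) \<ge> (a + b)^2" using ab_bound a1 bal by blast
  have n2: "(a+b)^2 \<ge> a + b" using a1 by (simp add: power2_eq_square)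
  have n4: "(a+b)^2 \<ge> 4" proof -
    have "a + b \<ge> 2" using a1 by simp
    then have "(a+b)*(a+b) \<ge> 2*2" using mult_le_mono by blast
    then show ?thesis by (simp add: power2_eq_square)
  qed
  have "fst (snd (snd (snd (hrp S m g (Node l r))))) \<le> 30 * (a+b)^2"
    unfolding ops by (rule arith_aux[OF IHl(1) IHr(1) c1 c2 c3 sq ab n2 n4]) simp
  moreover have "snd (snd (snd (snd (hrp S m g (Node l r))))) \<le> 15 * (a+b)"
  proof -
    have "pL \<le> 15 * (a+b)" using IHl by simp
    moreover have "length wL + 3 + pR \<le> 15 * (a+b)" using IHr lw a1 by simp
    moreover have "3 * (a + b) + 12 \<le> 15 * (a+b)" using a1 by simp
    ultimately show ?thesis unfolding sp by (simp only: max.bounded_iff)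
  qed
  ultimately show ?case using ln by simp
qed

theorem mainTheorem16:
  "\<exists>C::real. \<forall>(N::nat) (S::nat \<Rightarrow> nat \<Rightarrow> real) (m::nat \<Rightarrow> real) (g::real) (T::htree).
     spd N S \<and> 0 \<le> g \<and> g \<le> 1 \<and> balanced T \<and>
     distinct (leaves T) \<and> set (leaves T) = {..<N} \<longrightarrow>
       real (hrp_time S m g T) \<le> C * real N ^ 2 \<and>
       real (hrp_space N S m g T) \<le> C * real N ^ 2 \<and>
       real (hrp_aux_space S m g T) \<le> C * real N"
proof (rule exI[of _ 30], intro allI impI)
  fix N S m g T
  assume h: "spd N S \<and> 0 \<le> g \<and> g \<le> (1::real) \<and> balanced T \<and>
     distinct (leaves T) \<and> set (leaves T) = {..<N}"
  have NN: "length (leaves T) = N"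
    using h distinct_card[of "leaves T"] by simp
  have N1: "N \<ge> 1" using leaves_ne[of T] NN by simp
  have b: "hrp_time S m g T \<le> 30 * N^2" "hrp_aux_space S m g T \<le> 15 * N"
    using hrp_bounds[of T S m g] h NN by (auto simp: hrp_time_def hrp_aux_space_def)
  have "N \<le> N * N" using N1 by simp
  then have sp: "hrp_space N S m g T \<le> 30 * N^2"
  proof -
    have "15 * N \<le> 15 * (N * N)" using \<open>N \<le> N * N\<close> by simp
    then show ?thesis using b(2) \<open>N \<le> N * N\<close> unfolding hrp_space_def power2_eq_square by linarith
  qed
  have t: "real (hrp_time S m g T) \<le> 30 * real N ^ 2"
    using b(1) by (metis of_nat_le_iff of_nat_mult of_nat_numeral of_nat_power)
  have s: "real (hrp_space N S m g T) \<le> 30 * real N ^ 2"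
    using sp by (metis of_nat_le_iff of_nat_mult of_nat_numeral of_nat_power)
  have "hrp_aux_space S m g T \<le> 30 * N" using b(2) by simp
  then have a: "real (hrp_aux_space S m g T) \<le> 30 * real N"
    by (metis of_nat_le_iff of_nat_mult of_nat_numeral)
  show "real (hrp_time S m g T) \<le> 30 * real N ^ 2 \<and>
       real (hrp_space N S m g T) \<le> 30 * real N ^ 2 \<and>
       real (hrp_aux_space S m g T) \<le> 30 * real N" using t s a by simp
qed

end
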